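(* Let the boundary data satisfy $y_{\rm D}=\widetilde y_{\rm D}|_{\Gamma_{\rm D}}$ and $\phi_{\rm D}=\nabla\widetilde y_{\rm D}|_{\Gamma_{\rm D}}$ for some $\widetilde y_{\rm D}\in H^3(\omega)^3$, and let $(y_h)_{h>0}\subset H^1(\omega)^3$ be a sequence of discrete displacements (one for each triangulation $\mathcal{T}_h$). If the sequence $(\widetilde E_h[y_h])_{h>0}$ is uniformly bounded, then there exists a constant $C>0$, independent of $h$, such that $\|\nabla\nabla_h y_h\|_{L^2(\omega)}\le C$.
   Context: $\omega\subset\mathbb{R}^2$ is a bounded polygonal domain, $\Gamma_{\rm D}\subset\partial\omega$ a part of the boundary of positive length, $y_{\rm D}:\Gamma_{\rm D}\to\mathbb{R}^3$, $\phi_{\rm D}:\Gamma_{\rm D}\to\mathbb{R}^{3\times2}$, and $\alpha\in\mathbb{R}$. $(\mathcal{T}_h)_{h>0}$ is a family of regular triangulations of $\omega$ ($h$ = maximal element diameter) such that $\Gamma_{\rm D}$ is exactly a union of edges; $\mathcal{N}_h$ denotes the vertices and $\mathcal{E}_h$ the edges. For $T\in\mathcal{T}_h$ with barycenter $x_T$, $P_3^{\mathrm{red}}(T)=\{p\in P_3(T): p(x_T)=\frac16\sum_{z\in\mathcal{N}_h\cap T}(2p(z)-\nabla p(z)\cdot[z-x_T])\}$; $\mathcal{S}^{\mathrm{dkt}}(\mathcal{T}_h)=\{w_h\in C(\overline\omega): w_h|_T\in P_3^{\mathrm{red}}(T)\ \forall T,\ \nabla w_h\text{ continuous at each vertex}\}$;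 $\mathcal{S}^2(\mathcal{T}_h)$ = continuous piecewise quadratics. The discrete gradient $\nabla_h:\mathcal{S}^{\mathrm{dkt}}(\mathcal{T}_h)\to\mathcal{S}^2(\mathcal{T}_h)^2$ maps $y_h$ to the unique $\theta_h$ with $\theta_h(z)=\nabla y_h(z)$ at vertices $z$ and, at each edge midpoint $z_E$ of an edge $E$ with endpoints $z_E^1,z_E^2$, unit tangent $t_E$ and unit normal $n_E$: $\theta_h(z_E)\cdot t_E=\nabla y_h(z_E)\cdot t_E$, $\theta_h(z_E)\cdot n_E=\frac12[\nabla y_h(z_E^1)+\nabla y_h(z_E^2)]\cdot n_E$. It is applied componentwise to $y_h\in\mathcal{S}^{\mathrm{dkt}}(\mathcal{T}_h)^3$; $\nabla\nabla_h$ is taken elementwise, $\Delta_h=\operatorname{div}\nabla_h$ (elementwise), $\partial_iy_h$ denotes the $i$-th column of $\nabla y_h$. $\widehat{\mathcal{I}}^1_h$ is the elementwise nodal interpolation into (discontinuous) piecewise linear functions. The discrete admissible set is $\mathcal{A}_h=\{y_h\in\mathcal{S}^{\mathrm{dkt}}(\mathcal{T}_h)^3: y_h(z)=y_{\rm D}(z),\ \nabla y_h(z)=\phi_{\rm D}(z)\ \forall z\in\mathcal{N}_h\cap\Gamma_{\rm D},\ [\nabla y_h(z)]^\top\nabla y_h(z)=I_2\ \forall z\in\mathcal{N}_h\}$. The discrete energy (body force taken to be zero, as the paper assumes throughout this part) is $\widetilde E_h[y_h]=\frac12\int_\omega|\nabla\nabla_hy_h|^2dx-\alpha\int_\omega\widehat{\mathcal{I}}^1_h\{\Delta_hy_h\cdot[\partial_1y_h\times\partial_2y_h]\}dx$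 for $y_h\in\mathcal{A}_h$, and $\widetilde E_h[y_h]=\infty$ for $y_h\notin\mathcal{A}_h$. *)

theory Defs
  imports "HOL-Analysis.Analysis"
begin

definition polygonal_domain :: "(real^2) set \<Rightarrow> bool" where
  "polygonal_domain \<omega> \<longleftrightarrow> open \<omega> \<and> connected \<omega> \<and> bounded \<omega> \<and> \<omega> \<noteq> {} \<and>
     (\<exists>S. finite S \<and> frontier \<omega> = (\<Union>(a,b)\<in>S. closed_segment a b))"

definition positive_length :: "(real^2) set \<Rightarrow> bool" where
  "positive_length \<Gamma> \<longleftrightarrow> (\<exists>a b. a \<noteq> b \<and> closed_segment a b \<subseteq> \<Gamma>)"

definition triangle :: "(real^2) set \<Rightarrow> bool" where
  "triangle T \<longleftrightarrow> (\<exists>V. card V = 3 \<and> \<not> collinear V \<and> T = convex hull V)"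

definition verts :: "(real^2) set \<Rightarrow> (real^2) set" where
  "verts T = (THE V. card V = 3 \<and> \<not> collinear V \<and> T = convex hull V)"

definition edges :: "(real^2) set \<Rightarrow> (real^2) set set" where
  "edges T = {closed_segment a b | a b. a \<in> verts T \<and> b \<in> verts T \<and> a \<noteq> b}"

definition bary :: "(real^2) set \<Rightarrow> real^2" where
  "bary T = (1/3) *\<^sub>R (\<Sum>z\<in>verts T. z)"

definition regular_triangulation :: "(real^2) set \<Rightarrow> (real^2) set set \<Rightarrow> bool" where
  "regular_triangulation \<omega> Tr \<longleftrightarrow> finite Tr \<and> (\<forall>T\<in>Tr. triangle T) \<and> \<Union>Tr = closure \<omega> \<and>
     (\<forall>T\<in>Tr. \<forall>T'\<in>Tr. T \<noteq> T' \<longrightarrow>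
        T \<inter> T' = {} \<or>
        (\<exists>z. z \<in> verts T \<and> z \<in> verts T' \<and> T \<inter> T' = {z}) \<or>
        (\<exists>E. E \<in> edges T \<and> E \<in> edges T' \<and> T \<inter> T' = E))"

definition nodes :: "(real^2) set set \<Rightarrow> (real^2) set" where
  "nodes Tr = \<Union>(verts ` Tr)"

definition edges_of :: "(real^2) set set \<Rightarrow> (real^2) set set" where
  "edges_of Tr = \<Union>(edges ` Tr)"

definition mesh :: "(real^2) set set \<Rightarrow> real" where
  "mesh Tr = Max (diameter ` Tr)"

definition poly2 :: "nat \<Rightarrow> (real^2 \<Rightarrow> real) \<Rightarrow> bool" where
  "poly2 k p \<longleftrightarrow> (\<exists>c :: nat \<Rightarrow> nat \<Rightarrow> real.
      \<forall>x. p x = (\<Sum>i\<le>k. \<Sum>j\<le>k - i. c i j * (x$1)^i * (x$2)^j))"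

definition grad :: "(real^2 \<Rightarrow> real) \<Rightarrow> real^2 \<Rightarrow> real^2" where
  "grad f x = (\<chi> i. frechet_derivative f (at x) (axis i 1))"

definition lpoly :: "nat \<Rightarrow> (real^2) set \<Rightarrow> (real^2 \<Rightarrow> real) \<Rightarrow> (real^2 \<Rightarrow> real)" where
  "lpoly k T f = (THE p. poly2 k p \<and> (\<forall>x\<in>T. p x = f x))"

text \<open>Elementwise gradient of a vector field y on T (rows: components, columns: partial
  derivatives), computed from the cubic polynomial representing y on T.\<close>
definition ljac :: "(real^2) set \<Rightarrow> (real^2 \<Rightarrow> real^3) \<Rightarrow> real^2 \<Rightarrow> real^2^3" where
  "ljac T y x = (\<chi> k. grad (lpoly 3 T (\<lambda>x. y x $ k)) x)"

definition P3red :: "(real^2) set \<Rightarrow> (real^2 \<Rightarrow> real) \<Rightarrow> bool" where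
  "P3red T p \<longleftrightarrow> poly2 3 p \<and>
     p (bary T) = (1/6) * (\<Sum>z\<in>verts T. 2 * p z - grad p z \<bullet> (z - bary T))"

definition S_dkt :: "(real^2) set set \<Rightarrow> (real^2 \<Rightarrow> real) \<Rightarrow> bool" where
  "S_dkt Tr w \<longleftrightarrow> continuous_on (\<Union>Tr) w \<and>
     (\<forall>T\<in>Tr. \<exists>p. P3red T p \<and> (\<forall>x\<in>T. w x = p x)) \<and>
     (\<forall>z\<in>nodes Tr. \<forall>T\<in>Tr. \<forall>T'\<in>Tr. z \<in> T \<longrightarrow> z \<in> T' \<longrightarrow>
        grad (lpoly 3 T w) z = grad (lpoly 3 T' w) z)"

text \<open>Gradient of a DKT field at a vertex (well defined by the vertex continuity).\<close>
definition vjac :: "(real^2) set set \<Rightarrow> (real^2 \<Rightarrow> real^3) \<Rightarrow> real^2 \<Rightarrow> real^2^3" where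
  "vjac Tr y z = ljac (SOME T. T \<in> Tr \<and> z \<in> T) y z"

definition rot90 :: "real^2 \<Rightarrow> real^2" where
  "rot90 t = (\<chi> i. if i = 1 then - (t$2) else t$1)"

definition ldgrad :: "(real^2) set \<Rightarrow> (real^2 \<Rightarrow> real) \<Rightarrow> (real^2 \<Rightarrow> real^2)" where
  "ldgrad T w = (THE q. (\<forall>i. poly2 2 (\<lambda>x. q x $ i)) \<and>
      (\<forall>z\<in>verts T. q z = grad (lpoly 3 T w) z) \<and>
      (\<forall>a\<in>verts T. \<forall>b\<in>verts T. a \<noteq> b \<longrightarrow>
         (let m = (1/2) *\<^sub>R (a + b); t = (1 / norm (b - a)) *\<^sub>R (b - a); n = rot90 t in
            q m \<bullet> t = grad (lpoly 3 T w) m \<bullet> t \<and>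
            q m \<bullet> n = (1/2) * ((grad (lpoly 3 T w) a + grad (lpoly 3 T w) b) \<bullet> n))))"

text \<open>Elementwise derivative of the discrete gradient of component k:
  dgrad_deriv T y k x $ i $ j = partial_j (nabla_h y_k)_i.\<close>
definition dgrad_deriv :: "(real^2) set \<Rightarrow> (real^2 \<Rightarrow> real^3) \<Rightarrow> 3 \<Rightarrow> real^2 \<Rightarrow> real^2^2" where
  "dgrad_deriv T y k x = (\<chi> i. grad (\<lambda>x. ldgrad T (\<lambda>x. y x $ k) x $ i) x)"

definition hess_sq :: "(real^2) set \<Rightarrow> (real^2 \<Rightarrow> real^3) \<Rightarrow> real^2 \<Rightarrow> real" where
  "hess_sq T y x = (\<Sum>k\<in>UNIV. \<Sum>i\<in>UNIV. \<Sum>j\<in>UNIV. (dgrad_deriv T y k x $ i $ j)^2)"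

definition dlap :: "(real^2) set \<Rightarrow> (real^2 \<Rightarrow> real^3) \<Rightarrow> real^2 \<Rightarrow> real^3" where
  "dlap T y x = (\<chi> k. \<Sum>i\<in>UNIV. dgrad_deriv T y k x $ i $ i)"

definition dhess_norm :: "(real^2) set set \<Rightarrow> (real^2 \<Rightarrow> real^3) \<Rightarrow> real" where
  "dhess_norm Tr y = sqrt (\<Sum>T\<in>Tr. integral T (hess_sq T y))"

definition linterp1 :: "(real^2) set \<Rightarrow> (real^2 \<Rightarrow> real) \<Rightarrow> (real^2 \<Rightarrow> real)" where
  "linterp1 T f = (THE l. poly2 1 l \<and> (\<forall>z\<in>verts T. l z = f z))"

definition adm :: "(real^2) set set \<Rightarrow> (real^2) set \<Rightarrow> (real^2 \<Rightarrow> real^3) \<Rightarrow>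
    (real^2 \<Rightarrow> real^2^3) \<Rightarrow> (real^2 \<Rightarrow> real^3) set" where
  "adm Tr \<Gamma>D yD \<phi>D = {y. (\<forall>k. S_dkt Tr (\<lambda>x. y x $ k)) \<and>
      (\<forall>z\<in>nodes Tr \<inter> \<Gamma>D. y z = yD z \<and> vjac Tr y z = \<phi>D z) \<and>
      (\<forall>z\<in>nodes Tr. transpose (vjac Tr y z) ** vjac Tr y z = mat 1)}"

definition energy :: "(real^2) set set \<Rightarrow> (real^2) set \<Rightarrow> (real^2 \<Rightarrow> real^3) \<Rightarrow>
    (real^2 \<Rightarrow> real^2^3) \<Rightarrow> real \<Rightarrow> (real^2 \<Rightarrow> real^3) \<Rightarrow> ereal" where
  "energy Tr \<Gamma>D yD \<phi>D \<alpha> y =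
     (if y \<in> adm Tr \<Gamma>D yD \<phi>D then
        ereal ((1/2) * (\<Sum>T\<in>Tr. integral T (hess_sq T y))
          - \<alpha> * (\<Sum>T\<in>Tr. integral T (linterp1 T
               (\<lambda>x. dlap T y x \<bullet> cross3 (column 1 (ljac T y x)) (column 2 (ljac T y x))))))
      else \<infinity>)"

definition pd :: "2 \<Rightarrow> (real^2 \<Rightarrow> real) \<Rightarrow> (real^2 \<Rightarrow> real)" where
  "pd i f = (\<lambda>x. frechet_derivative f (at x) (axis i 1))"

fun pds :: "2 list \<Rightarrow> (real^2 \<Rightarrow> real) \<Rightarrow> (real^2 \<Rightarrow> real)" where
  "pds [] f = f"
| "pds (i # is) f = pd i (pds is f)"

definition test_fun :: "(real^2) set \<Rightarrow> (real^2 \<Rightarrow> real) \<Rightarrow> bool" where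
  "test_fun \<omega> \<phi> \<longleftrightarrow> (\<forall>ds x. pds ds \<phi> differentiable (at x)) \<and>
     (\<exists>K. compact K \<and> K \<subseteq> \<omega> \<and> (\<forall>x. x \<notin> K \<longrightarrow> \<phi> x = 0))"

definition L2 :: "(real^2) set \<Rightarrow> (real^2 \<Rightarrow> real) \<Rightarrow> bool" where
  "L2 \<omega> g \<longleftrightarrow> set_borel_measurable lborel \<omega> g \<and> set_integrable lborel \<omega> (\<lambda>x. (g x)^2)"

definition weak_deriv :: "(real^2) set \<Rightarrow> 2 list \<Rightarrow> (real^2 \<Rightarrow> real) \<Rightarrow> (real^2 \<Rightarrow> real) \<Rightarrow> bool" where
  "weak_deriv \<omega> ds f g \<longleftrightarrow> (\<forall>\<phi>. test_fun \<omega> \<phi> \<longrightarrow>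
      set_integrable lborel \<omega> (\<lambda>x. f x * pds ds \<phi> x) \<and>
      set_integrable lborel \<omega> (\<lambda>x. g x * \<phi> x) \<and>
      (LINT x:\<omega>|lborel. f x * pds ds \<phi> x) = (-1)^(length ds) * (LINT x:\<omega>|lborel. g x * \<phi> x))"

definition H3 :: "(real^2) set \<Rightarrow> (real^2 \<Rightarrow> real^3) \<Rightarrow> bool" where
  "H3 \<omega> f \<longleftrightarrow> L2 \<omega> (\<lambda>x. f x $ 1) \<and> L2 \<omega> (\<lambda>x. f x $ 2) \<and> L2 \<omega> (\<lambda>x. f x $ 3) \<and>
     (\<forall>k ds. length ds \<le> 3 \<longrightarrow> (\<exists>g. L2 \<omega> g \<and> weak_deriv \<omega> ds (\<lambda>x. f x $ k) g))"

end

theory Submission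
  imports Defs
begin
lemma poly2_1_iff: "poly2 1 p \<longleftrightarrow> (\<exists>c0 c1 c2. \<forall>x. p x = c0 + c1 * x$1 + c2 * x$2)"
proof
  assume "poly2 1 p"
  then obtain c where c: "\<forall>x. p x = (\<Sum>i\<le>1. \<Sum>j\<le>1 - i. c i j * (x$1)^i * (x$2)^j)"
    unfolding poly2_def by blast
  show "\<exists>c0 c1 c2. \<forall>x. p x = c0 + c1 * x$1 + c2 * x$2"
    by (rule exI[of _ "c 0 0"], rule exI[of _ "c 1 0"], rule exI[of _ "c 0 1"]) (simp add: c)
next
  assume "\<exists>c0 c1 c2. \<forall>x. p x = c0 + c1 * x$1 + c2 * x$2"
  then obtain c0 c1 c2 where c: "\<forall>x. p x = c0 + c1 * x$1 + c2 * x$2" by blast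
  show "poly2 1 p" unfolding poly2_def
    by (rule exI[of _ "\<lambda>i j. if i = 0 \<and> j = 0 then c0 else if i = 1 \<and> j = 0 then c1 else if i = 0 \<and> j = 1 then c2 else 0"]) (simp add: c)
qed

lemma poly2_2_iff: "poly2 2 p \<longleftrightarrow> (\<exists>c00 c10 c01 c20 c11 c02. \<forall>x. p x = c00 + c10 * x$1 + c01 * x$2 + c20 * (x$1)^2 + c11 * (x$1 * x$2) + c02 * (x$2)^2)"
proof
  assume "poly2 2 p"
  then obtain c where c: "\<forall>x. p x = (\<Sum>i\<le>2. \<Sum>j\<le>2 - i. c i j * (x$1)^i * (x$2)^j)"
    unfolding poly2_def by blast
  show "\<exists>c00 c10 c01 c20 c11 c02. \<forall>x. p x = c00 + c10 * x$1 + c01 * x$2 + c20 * (x$1)^2 + c11 * (x$1 * x$2) + c02 * (x$2)^2"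
    by (rule exI[of _ "c 0 0"], rule exI[of _ "c 1 0"], rule exI[of _ "c 0 1"],
        rule exI[of _ "c 2 0"], rule exI[of _ "c 1 1"], rule exI[of _ "c 0 2"]) (simp add: c numeral_2_eq_2 algebra_simps)
next
  assume "\<exists>c00 c10 c01 c20 c11 c02. \<forall>x. p x = c00 + c10 * x$1 + c01 * x$2 + c20 * (x$1)^2 + c11 * (x$1 * x$2) + c02 * (x$2)^2"
  then obtain c00 c10 c01 c20 c11 c02 where c: "\<forall>x. p x = c00 + c10 * x$1 + c01 * x$2 + c20 * (x$1)^2 + c11 * (x$1 * x$2) + c02 * (x$2)^2" by blast
  show "poly2 2 p" unfolding poly2_def
    by (rule exI[of _ "\<lambda>i j. if i = 0 \<and> j = 0 then c00 else if i = 1 \<and> j = 0 then c10 else if i = 0 \<and> j = 1 then c01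
        else if i = 2 \<and> j = 0 then c20 else if i = 1 \<and> j = 1 then c11 else if i = 0 \<and> j = 2 then c02 else 0"]) (simp add: c numeral_2_eq_2 algebra_simps)
qed

definition affn :: "(real^2 \<Rightarrow> real) \<Rightarrow> bool" where
  "affn f \<longleftrightarrow> (\<exists>c0 c1 c2. \<forall>x. f x = c0 + c1 * x$1 + c2 * x$2)"

definition quadn :: "(real^2 \<Rightarrow> real) \<Rightarrow> bool" where
  "quadn p \<longleftrightarrow> (\<exists>c00 c10 c01 c20 c11 c02. \<forall>x. p x = c00 + c10 * x$1 + c01 * x$2 + c20 * (x$1)^2 + c11 * (x$1 * x$2) + c02 * (x$2)^2)"

lemma affn_quadn: "affn f \<Longrightarrow> quadn f"
  unfolding affn_def quadn_def
  by (metis (no_types, opaque_lifting) add.right_neutral mult_zero_left)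

lemma affn_const: "affn (\<lambda>x. c)"
  unfolding affn_def by (rule exI[of _ c], rule exI[of _ 0], rule exI[of _ 0]) auto

lemma affn_add: "affn f \<Longrightarrow> affn g \<Longrightarrow> affn (\<lambda>x. f x + g x)"
proof -
  assume "affn f" "affn g"
  then obtain a0 a1 a2 b0 b1 b2 where fg: "\<forall>x. f x = a0 + a1 * x$1 + a2 * x$2" "\<forall>x. g x = b0 + b1 * x$1 + b2 * x$2"
    unfolding affn_def by blast
  show ?thesis unfolding affn_def by (rule exI[of _ "a0+b0"], rule exI[of _ "a1+b1"], rule exI[of _ "a2+b2"]) (simp add: fg algebra_simps)
qed

lemma affn_scale: "affn f \<Longrightarrow> affn (\<lambda>x. c * f x)"
  unfolding affn_def
  apply clarify
  subgoal for a0 a1 a2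
    by (rule exI[of _ "c*a0"], rule exI[of _ "c*a1"], rule exI[of _ "c*a2"]) (simp add: algebra_simps)
  done

lemma quadn_add: "quadn f \<Longrightarrow> quadn g \<Longrightarrow> quadn (\<lambda>x. f x + g x)"
proof -
  assume "quadn f" "quadn g"
  then obtain a0 a1 a2 a3 a4 a5 b0 b1 b2 b3 b4 b5 where fg:
    "\<forall>x. f x = a0 + a1 * x$1 + a2 * x$2 + a3 * (x$1)^2 + a4 * (x$1 * x$2) + a5 * (x$2)^2"
    "\<forall>x. g x = b0 + b1 * x$1 + b2 * x$2 + b3 * (x$1)^2 + b4 * (x$1 * x$2) + b5 * (x$2)^2"
    unfolding quadn_def by blast
  show ?thesis unfolding quadn_def by (rule exI[of _ "a0+b0"], rule exI[of _ "a1+b1"], rule exI[of _ "a2+b2"],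
        rule exI[of _ "a3+b3"], rule exI[of _ "a4+b4"], rule exI[of _ "a5+b5"]) (simp add: fg algebra_simps)
qed

lemma quadn_scale: "quadn f \<Longrightarrow> quadn (\<lambda>x. c * f x)"
  unfolding quadn_def
  apply clarify
  subgoal for a0 a1 a2 a3 a4 a5
    by (rule exI[of _ "c*a0"], rule exI[of _ "c*a1"], rule exI[of _ "c*a2"],
        rule exI[of _ "c*a3"], rule exI[of _ "c*a4"], rule exI[of _ "c*a5"]) (simp add: algebra_simps)
  done

lemma quadn_mult: "affn f \<Longrightarrow> affn g \<Longrightarrow> quadn (\<lambda>x. f x * g x)"
proof -
  assume "affn f" "affn g"
  then obtain a0 a1 a2 b0 b1 b2 where fg: "\<forall>x. f x = a0 + a1 * x$1 + a2 * x$2" "\<forall>x. g x = b0 + b1 * x$1 + b2 * x$2"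
    unfolding affn_def by blast
  show ?thesis unfolding quadn_def by (rule exI[of _ "a0*b0"], rule exI[of _ "a0*b1+a1*b0"], rule exI[of _ "a0*b2+a2*b0"],
        rule exI[of _ "a1*b1"], rule exI[of _ "a1*b2+a2*b1"], rule exI[of _ "a2*b2"]) (simp add: fg algebra_simps power2_eq_square)
qed

lemma poly2_1_affn: "poly2 1 p \<longleftrightarrow> affn p"
  unfolding poly2_1_iff affn_def ..

lemma poly2_2_quadn: "poly2 2 p \<longleftrightarrow> quadn p"
  unfolding poly2_2_iff quadn_def ..

definition det2 :: "real^2 \<Rightarrow> real^2 \<Rightarrow> real" where
  "det2 u v = u$1 * v$2 - u$2 * v$1"

lemma noncol_det:
  assumes "\<not> collinear {a, b, c::real^2}"
  shows "det2 (b - a) (c - a) \<noteq> 0"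
proof
  assume D: "det2 (b - a) (c - a) = 0"
  have "collinear {0, b - a, c - a}"
  proof (cases "b - a = 0")
    case True then show ?thesis by (simp add: collinear_lemma)
  next
    case False
    then obtain i where i: "(b - a)$i \<noteq> 0" by (metis vec_eq_iff zero_index)
    define u where "u = b - a"
    define v where "v = c - a"
    have Du: "u$1 * v$2 = u$2 * v$1" using D by (simp add: det2_def u_def v_def)
    have "v = (v$i / u$i) *\<^sub>R u"
      using i Du unfolding u_def[symmetric]
      apply (simp add: vec_eq_iff forall_2)
      using exhaust_2[of i] by (auto simp: field_simps)
    then show ?thesis by (simp add: collinear_lemma u_def v_def)
  qed
  then have "collinear {b, a, c}" by (simp add: collinear_3)
  then show False using assms by (simp add: insert_commute)
qed

definition bs :: "real^2 \<Rightarrow> real^2 \<Rightarrow> real^2 \<Rightarrow> real^2 \<Rightarrow> real" where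
  "bs a u v x = det2 (x - a) v / det2 u v"
definition bt :: "real^2 \<Rightarrow> real^2 \<Rightarrow> real^2 \<Rightarrow> real^2 \<Rightarrow> real" where
  "bt a u v x = det2 u (x - a) / det2 u v"

lemma affn_bs: "affn (bs a u v)"
  unfolding affn_def bs_def det2_def
  by (rule exI[of _ "(- a$1 * v$2 + a$2 * v$1) / (u$1 * v$2 - u$2 * v$1)"],
      rule exI[of _ "v$2 / (u$1 * v$2 - u$2 * v$1)"], rule exI[of _ "- v$1 / (u$1 * v$2 - u$2 * v$1)"])
     (simp add: field_simps diff_divide_distrib add_divide_distrib)

lemma affn_bt: "affn (bt a u v)"
  unfolding affn_def bt_def det2_def
  by (rule exI[of _ "(- u$1 * a$2 + u$2 * a$1) / (u$1 * v$2 - u$2 * v$1)"],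
      rule exI[of _ "- u$2 / (u$1 * v$2 - u$2 * v$1)"], rule exI[of _ "u$1 / (u$1 * v$2 - u$2 * v$1)"])
     (simp add: field_simps diff_divide_distrib add_divide_distrib)

lemma bs_bt_repr:
  assumes D: "det2 u v \<noteq> 0" shows "x = a + bs a u v x *\<^sub>R u + bt a u v x *\<^sub>R v"
proof -
  let ?D = "det2 u v"
  have e1: "?D * (x$1 - a$1) = det2 (x - a) v * u$1 + det2 u (x - a) * v$1"
    unfolding det2_def by (simp add: algebra_simps)
  have e2: "?D * (x$2 - a$2) = det2 (x - a) v * u$2 + det2 u (x - a) * v$2"
    unfolding det2_def by (simp add: algebra_simps)
  have "x$1 = a$1 + (det2 (x - a) v / ?D) * u$1 + (det2 u (x - a) / ?D) * v$1"
    using e1 D by (simp add: field_simps)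
  moreover have "x$2 = a$2 + (det2 (x - a) v / ?D) * u$2 + (det2 u (x - a) / ?D) * v$2"
    using e2 D by (simp add: field_simps)
  ultimately show ?thesis unfolding bs_def bt_def by (simp add: vec_eq_iff forall_2)
qed

lemma bs_apply: "det2 u v \<noteq> 0 \<Longrightarrow> bs a u v (a + s *\<^sub>R u + t *\<^sub>R v) = s"
  unfolding bs_def det2_def by (simp add: field_simps; (simp add: algebra_simps)?)

lemma bt_apply: "det2 u v \<noteq> 0 \<Longrightarrow> bt a u v (a + s *\<^sub>R u + t *\<^sub>R v) = t"
  unfolding bt_def det2_def by (simp add: field_simps; (simp add: algebra_simps)?)

lemma quad_expand: "c00 + c10 * (a1+s*u1+t*w1) + c01 * (a2+s*u2+t*w2) + c20 * (a1+s*u1+t*w1)^2 + c11 * ((a1+s*u1+t*w1)*(a2+s*u2+t*w2)) + c02*(a2+s*u2+t*w2)^2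
  = (c00 + c10*a1 + c01*a2 + c20*a1^2 + c11*(a1*a2) + c02*a2^2) + (c10*u1 + c01*u2 + 2*c20*a1*u1 + c11*(a1*u2 + u1*a2) + 2*c02*a2*u2) * s
   + (c10*w1 + c01*w2 + 2*c20*a1*w1 + c11*(a1*w2 + w1*a2) + 2*c02*a2*w2) * t + (c20*u1^2 + c11*(u1*u2) + c02*u2^2) * s^2
   + (2*c20*u1*w1 + c11*(u1*w2 + u2*w1) + 2*c02*u2*w2) * (s*t) + (c20*w1^2 + c11*(w1*w2) + c02*w2^2) * t^2"
  for c00 c10 c01 c20 c11 c02 a1 a2 u1 u2 w1 w2 s t :: real
  by (simp add: power2_eq_square algebra_simps)

lemma quadn_pull:
  assumes "quadn p"
  shows "\<exists>E0 E1 E2 E3 E4 E5. \<forall>s t. p (a + s *\<^sub>R u + t *\<^sub>R v) = E0 + E1 * s + E2 * t + E3 * s^2 + E4 * (s * t) + E5 * t^2"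
proof -
  obtain c00 c10 c01 c20 c11 c02 where c: "\<And>x. p x = c00 + c10 * x$1 + c01 * x$2 + c20 * (x$1)^2 + c11 * (x$1 * x$2) + c02 * (x$2)^2"
    using assms unfolding quadn_def by blast
  have X: "\<And>s t. (a + s *\<^sub>R u + t *\<^sub>R v)$1 = a$1 + s * u$1 + t * v$1"
   and Y: "\<And>s t. (a + s *\<^sub>R u + t *\<^sub>R v)$2 = a$2 + s * u$2 + t * v$2" by simp_all
  show ?thesis
    unfolding c X Y quad_expand by blast
qed

lemma affn_pull:
  assumes "affn p"
  shows "p (a + s *\<^sub>R u + t *\<^sub>R v) = p a + s * (p (a + u) - p a) + t * (p (a + v) - p a)"
proof -
  obtain c0 c1 c2 where c: "\<forall>x. p x = c0 + c1 * x$1 + c2 * x$2"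
    using assms unfolding affn_def by blast
  show ?thesis by (simp add: c algebra_simps)
qed

lemma quadn_zero:
  assumes D: "det2 u v \<noteq> 0" and q: "quadn p"
    and z: "p a = 0" "p (a + u) = 0" "p (a + v) = 0" "p (a + (1/2) *\<^sub>R u) = 0"
      "p (a + (1/2) *\<^sub>R v) = 0" "p (a + (1/2) *\<^sub>R u + (1/2) *\<^sub>R v) = 0"
  shows "p x = 0"
proof -
  obtain E0 E1 E2 E3 E4 E5 where E: "\<And>s t. p (a + s *\<^sub>R u + t *\<^sub>R v) = E0 + E1 * s + E2 * t + E3 * s^2 + E4 * (s * t) + E5 * t^2"
    using quadn_pull[OF q, of a u v] by blast
  have "E0 = 0" using E[of 0 0] z(1) by simp
  have h1: "E0 + E1 + E3 = 0" using E[of 1 0] z(2) by simp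
  have h2: "E0 + E2 + E5 = 0" using E[of 0 1] z(3) by simp
  have h3: "E0 + E1/2 + E3/4 = 0" using E[of "1/2" 0] z(4) by (simp add: power2_eq_square)
  have h4: "E0 + E2/2 + E5/4 = 0" using E[of 0 "1/2"] z(5) by (simp add: power2_eq_square)
  have h5: "E0 + E1/2 + E2/2 + E3/4 + E4/4 + E5/4 = 0" using E[of "1/2" "1/2"] z(6) by (simp add: power2_eq_square)
  have "E1 = 0" "E2 = 0" "E3 = 0" "E4 = 0" "E5 = 0" using \<open>E0 = 0\<close> h1 h2 h3 h4 h5 by linarith+
  then have "p (a + bs a u v x *\<^sub>R u + bt a u v x *\<^sub>R v) = 0" using E \<open>E0 = 0\<close> by simp
  then show ?thesis using bs_bt_repr[OF D, of x a] by simp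
qed

lemma affn_zero:
  assumes D: "det2 u v \<noteq> 0" and q: "affn p"
    and z: "p a = 0" "p (a + u) = 0" "p (a + v) = 0"
  shows "p x = 0"
proof -
  have "p (a + bs a u v x *\<^sub>R u + bt a u v x *\<^sub>R v) = 0" using affn_pull[OF q] z by simp
  then show ?thesis using bs_bt_repr[OF D, of x a] by simp
qed

lemma p2_exists:
  assumes D: "det2 u v \<noteq> 0"
  shows "\<exists>p. quadn p \<and> p a = f0 \<and> p (a + u) = f1 \<and> p (a + v) = f2 \<and> p (a + (1/2) *\<^sub>R u) = f01
     \<and> p (a + (1/2) *\<^sub>R v) = f02 \<and> p (a + (1/2) *\<^sub>R u + (1/2) *\<^sub>R v) = f12"
proof -
  define S where "S = bs a u v"
  define T where "T = bt a u v"
  define R where "R = (\<lambda>x. 1 + (-1) * S x + (-1) * T x)"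
  define p where "p = (\<lambda>x. f0 * (R x * (2 * R x + (-1))) + f1 * (S x * (2 * S x + (-1))) + f2 * (T x * (2 * T x + (-1)))
     + (4 * f01) * (R x * S x) + (4 * f02) * (R x * T x) + (4 * f12) * (S x * T x))"
  have aS: "affn S" "affn T" unfolding S_def T_def by (rule affn_bs, rule affn_bt)
  have aR: "affn R" unfolding R_def
    by (rule affn_add[OF affn_add[OF affn_const affn_scale[OF aS(1)]] affn_scale[OF aS(2)]])
  have a2: "affn (\<lambda>x. 2 * f x + (-1))" if "affn f" for f
    by (rule affn_add[OF affn_scale[OF that] affn_const])
  have m1: "quadn (\<lambda>x. R x * (2 * R x + (-1)))" by (rule quadn_mult[OF aR a2[OF aR]])
  have m2: "quadn (\<lambda>x. S x * (2 * S x + (-1)))" by (rule quadn_mult[OF aS(1) a2[OF aS(1)]])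
  have m3: "quadn (\<lambda>x. T x * (2 * T x + (-1)))" by (rule quadn_mult[OF aS(2) a2[OF aS(2)]])
  have m4: "quadn (\<lambda>x. R x * S x)" by (rule quadn_mult[OF aR aS(1)])
  have m5: "quadn (\<lambda>x. R x * T x)" by (rule quadn_mult[OF aR aS(2)])
  have m6: "quadn (\<lambda>x. S x * T x)" by (rule quadn_mult[OF aS(1) aS(2)])
  have "quadn p" unfolding p_def
    by (rule quadn_add[OF quadn_add[OF quadn_add[OF quadn_add[OF quadn_add[OF quadn_scale[OF m1] quadn_scale[OF m2]]
         quadn_scale[OF m3]] quadn_scale[OF m4]] quadn_scale[OF m5]] quadn_scale[OF m6]])
  moreover have ev: "p (a + s *\<^sub>R u + t *\<^sub>R v) = (let r = 1 - s - t in f0 * (r * (2 * r - 1)) + f1 * (s * (2 * s - 1)) + f2 * (t * (2 * t - 1))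
     + (4 * f01) * (r * s) + (4 * f02) * (r * t) + (4 * f12) * (s * t))" for s t
    unfolding p_def R_def S_def T_def bs_apply[OF D] bt_apply[OF D] by (simp add: Let_def)
  have "p a = f0" using ev[of 0 0] by simp
  moreover have "p (a + u) = f1" using ev[of 1 0] by simp
  moreover have "p (a + v) = f2" using ev[of 0 1] by simp
  moreover have "p (a + (1/2) *\<^sub>R u) = f01" using ev[of "1/2" 0] by (simp add: Let_def)
  moreover have "p (a + (1/2) *\<^sub>R v) = f02" using ev[of 0 "1/2"] by (simp add: Let_def)
  moreover have "p (a + (1/2) *\<^sub>R u + (1/2) *\<^sub>R v) = f12" using ev[of "1/2" "1/2"] by (simp add: Let_def)
  ultimately show ?thesis by blast
qed

lemma p1_exists:
  assumes D: "det2 u v \<noteq> 0"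
  shows "\<exists>p. affn p \<and> p a = f0 \<and> p (a + u) = f1 \<and> p (a + v) = f2"
proof -
  define S where "S = bs a u v"
  define T where "T = bt a u v"
  define p where "p = (\<lambda>x. f0 + (-f0) * S x + (-f0) * T x + f1 * S x + f2 * T x)"
  have aS: "affn S" "affn T" unfolding S_def T_def by (rule affn_bs, rule affn_bt)
  have "affn p" unfolding p_def
    by (rule affn_add[OF affn_add[OF affn_add[OF affn_add[OF affn_const affn_scale[OF aS(1)]] affn_scale[OF aS(2)]] affn_scale[OF aS(1)]] affn_scale[OF aS(2)]])
  moreover have ev: "p (a + s *\<^sub>R u + t *\<^sub>R v) = f0 * (1 - s - t) + f1 * s + f2 * t" for s t
    unfolding p_def S_def T_def bs_apply[OF D] bt_apply[OF D] by (simp add: algebra_simps)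
  have "p a = f0" using ev[of 0 0] by simp
  moreover have "p (a + u) = f1" using ev[of 1 0] by simp
  moreover have "p (a + v) = f2" using ev[of 0 1] by simp
  ultimately show ?thesis by blast
qed

lemma triangle_verts:
  assumes "triangle T"
  shows "\<exists>a b c. verts T = {a, b, c} \<and> T = convex hull {a, b, c} \<and> \<not> collinear {a, b, c}"
proof -
  obtain V where V: "card V = 3" "\<not> collinear V" "T = convex hull V"
    using assms unfolding triangle_def by blast
  have uniq: "W = {x. x extreme_point_of T}" if W: "card W = 3" "\<not> collinear W" "T = convex hull W" for W
  proof -
    obtain a b c where abc: "W = {a, b, c}"
      using W(1) unfolding card_3_iff by blast
    have ind: "\<not> affine_dependent W" using W(2) unfolding abc collinear_3_eq_affine_dependent[of a b c] by simp
    show ?thesis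
      using extreme_point_of_convex_hull_affine_independent[OF ind] W(3) by auto
  qed
  have "verts T = V"
    unfolding verts_def
  proof (rule the_equality)
    show "card V = 3 \<and> \<not> collinear V \<and> T = convex hull V" using V by (intro conjI)
    show "W = V" if "card W = 3 \<and> \<not> collinear W \<and> T = convex hull W" for W
    proof -
      have "W = {x. x extreme_point_of T}" using that by (intro uniq) auto
      also have "\<dots> = V" using V by (intro uniq[symmetric])
      finally show ?thesis .
    qed
  qed
  moreover obtain a b c where "V = {a, b, c}"
    using V(1) unfolding card_3_iff by blast
  ultimately show ?thesis using V by auto
qed

lemma rot90_neg: "rot90 (- t) = - rot90 t"
  by (simp add: rot90_def vec_eq_iff forall_2)

lemma rot90_inner: "rot90 t \<bullet> t = 0" "t \<bullet> rot90 t = 0" "rot90 t \<bullet> rot90 t = t \<bullet> t"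
  by (simp_all add: rot90_def inner_vec_def sum_2 algebra_simps)

lemma decomp_unit:
  fixes z t :: "real^2"
  assumes "norm t = 1"
  shows "z = (z \<bullet> t) *\<^sub>R t + (z \<bullet> rot90 t) *\<^sub>R rot90 t"
proof -
  have "t \<bullet> t = 1" using assms by (simp add: power2_norm_eq_inner[symmetric])
  then have tt: "t$1 * t$1 + t$2 * t$2 = 1" by (simp add: inner_vec_def sum_2)
  have e1: "(z$1 * t$1 + z$2 * t$2) * t$1 + (z$1 * (- t$2) + z$2 * t$1) * (- t$2) = z$1 * (t$1 * t$1 + t$2 * t$2)"
    by (simp add: algebra_simps)
  have e2: "(z$1 * t$1 + z$2 * t$2) * t$2 + (z$1 * (- t$2) + z$2 * t$1) * t$1 = z$2 * (t$1 * t$1 + t$2 * t$2)"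
    by (simp add: algebra_simps)
  have "z$1 = (z$1 * t$1 + z$2 * t$2) * t$1 + (z$1 * (- t$2) + z$2 * t$1) * (- t$2)"
    unfolding e1 tt by simp
  moreover have "z$2 = (z$1 * t$1 + z$2 * t$2) * t$2 + (z$1 * (- t$2) + z$2 * t$1) * t$1"
    unfolding e2 tt by simp
  ultimately show ?thesis
    by (simp add: vec_eq_iff forall_2 inner_vec_def sum_2 rot90_def)
qed

definition tg :: "(real^2 \<Rightarrow> real^2) \<Rightarrow> real^2 \<Rightarrow> real^2 \<Rightarrow> real^2" where
  "tg g p q = (let m = (1/2) *\<^sub>R (p + q); t = (1 / norm (q - p)) *\<^sub>R (q - p); n = rot90 t in
     (g m \<bullet> t) *\<^sub>R t + ((1/2) * ((g p + g q) \<bullet> n)) *\<^sub>R n)"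

lemma tg_sym: "tg g p q = tg g q p"
proof -
  have "q - p = - (p - q)" by simp
  then have "(1 / norm (q - p)) *\<^sub>R (q - p) = - ((1 / norm (p - q)) *\<^sub>R (p - q))"
    by (simp add: norm_minus_commute algebra_simps)
  then show ?thesis unfolding tg_def Let_def
    by (simp add: rot90_neg add.commute)
qed

lemma unit_dir: "p \<noteq> q \<Longrightarrow> norm ((1 / norm (q - p)) *\<^sub>R (q - p)) = 1"
  by simp

lemma edge_cond_iff:
  fixes Q g :: "real^2 \<Rightarrow> real^2"
  assumes "p \<noteq> q"
  shows "(let m = (1/2) *\<^sub>R (p + q); t = (1 / norm (q - p)) *\<^sub>R (q - p); n = rot90 t in
            Q m \<bullet> t = g m \<bullet> t \<and> Q m \<bullet> n = (1/2) * ((g p + g q) \<bullet> n))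
         \<longleftrightarrow> Q ((1/2) *\<^sub>R (p + q)) = tg g p q"
proof -
  define t where "t = (1 / norm (q - p)) *\<^sub>R (q - p)"
  define m where "m = (1/2) *\<^sub>R (p + q)"
  have t1: "norm t = 1" unfolding t_def using assms by simp
  then have tt: "t \<bullet> t = 1" by (simp add: power2_norm_eq_inner[symmetric])
  have "(Q m \<bullet> t = g m \<bullet> t \<and> Q m \<bullet> rot90 t = (1/2) * ((g p + g q) \<bullet> rot90 t))
        \<longleftrightarrow> Q m = (g m \<bullet> t) *\<^sub>R t + ((1/2) * ((g p + g q) \<bullet> rot90 t)) *\<^sub>R rot90 t"
  proof
    assume h: "Q m \<bullet> t = g m \<bullet> t \<and> Q m \<bullet> rot90 t = (1/2) * ((g p + g q) \<bullet> rot90 t)"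
    show "Q m = (g m \<bullet> t) *\<^sub>R t + ((1/2) * ((g p + g q) \<bullet> rot90 t)) *\<^sub>R rot90 t"
      using decomp_unit[OF t1, of "Q m"] h by simp
  next
    assume h: "Q m = (g m \<bullet> t) *\<^sub>R t + ((1/2) * ((g p + g q) \<bullet> rot90 t)) *\<^sub>R rot90 t"
    show "Q m \<bullet> t = g m \<bullet> t \<and> Q m \<bullet> rot90 t = (1/2) * ((g p + g q) \<bullet> rot90 t)"
      unfolding h using tt by (simp add: inner_add_left rot90_inner)
  qed
  then show ?thesis unfolding tg_def Let_def t_def[symmetric] m_def[symmetric] .
qed

lemma mid_repr:
  fixes a b c :: "real^2"
  shows "a + (b - a) = b" "a + (c - a) = c"
    "a + (1/2) *\<^sub>R (b - a) = (1/2) *\<^sub>R (a + b)"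
    "a + (1/2) *\<^sub>R (c - a) = (1/2) *\<^sub>R (a + c)"
    "a + (1/2) *\<^sub>R (b - a) + (1/2) *\<^sub>R (c - a) = (1/2) *\<^sub>R (b + c)"
  by (simp_all add: vec_eq_iff field_simps)

lemma mid_sym: "(1/2) *\<^sub>R (p + q) = (1/2) *\<^sub>R (q + (p::real^2))"
  by (simp add: add.commute)

lemma ldgrad_quad:
  assumes V: "verts T = {a, b, c}" and nc: "\<not> collinear {a, b, c}"
  shows "quadn (\<lambda>x. ldgrad T w x $ i)"
proof -
  define g where "g = grad (lpoly 3 T w)"
  define u where "u = b - a"
  define v where "v = c - a"
  have D: "det2 u v \<noteq> 0" unfolding u_def v_def by (rule noncol_det[OF nc])
  have dist: "a \<noteq> b" "a \<noteq> c" "b \<noteq> c"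
    using nc by (auto simp: collinear_2 insert_commute)
  define P where "P = (\<lambda>q :: real^2 \<Rightarrow> real^2. (\<forall>i. poly2 2 (\<lambda>x. q x $ i)) \<and>
      (\<forall>z\<in>verts T. q z = grad (lpoly 3 T w) z) \<and>
      (\<forall>a\<in>verts T. \<forall>b\<in>verts T. a \<noteq> b \<longrightarrow>
         (let m = (1/2) *\<^sub>R (a + b); t = (1 / norm (b - a)) *\<^sub>R (b - a); n = rot90 t in
            q m \<bullet> t = grad (lpoly 3 T w) m \<bullet> t \<and>
            q m \<bullet> n = (1/2) * ((grad (lpoly 3 T w) a + grad (lpoly 3 T w) b) \<bullet> n))))"
  have ld: "ldgrad T w = The P" unfolding ldgrad_def P_def ..
  have Piff: "P q \<longleftrightarrow> (\<forall>i. quadn (\<lambda>x. q x $ i)) \<and> q a = g a \<and> q b = g b \<and> q c = g c \<and>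
      q ((1/2) *\<^sub>R (a + b)) = tg g a b \<and> q ((1/2) *\<^sub>R (a + c)) = tg g a c \<and> q ((1/2) *\<^sub>R (b + c)) = tg g b c" for q
  proof -
    have E: "(\<forall>p\<in>{a,b,c}. \<forall>r\<in>{a,b,c}. p \<noteq> r \<longrightarrow> q ((1/2) *\<^sub>R (p + r)) = tg g p r) \<longleftrightarrow>
       q ((1/2) *\<^sub>R (a + b)) = tg g a b \<and> q ((1/2) *\<^sub>R (a + c)) = tg g a c \<and> q ((1/2) *\<^sub>R (b + c)) = tg g b c"
      using dist by (simp add: tg_sym[of g b a] tg_sym[of g c a] tg_sym[of g c b] add.commute[of b a] add.commute[of c a]
          add.commute[of c b] eq_commute[of b a] eq_commute[of c a] eq_commute[of c b]) blast
    have L: "(\<forall>p\<in>{a,b,c}. \<forall>r\<in>{a,b,c}. p \<noteq> r \<longrightarrow>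
         (let m = (1/2) *\<^sub>R (p + r); t = (1 / norm (r - p)) *\<^sub>R (r - p); n = rot90 t in
            q m \<bullet> t = g m \<bullet> t \<and> q m \<bullet> n = (1/2) * ((g p + g r) \<bullet> n)))
       \<longleftrightarrow> (\<forall>p\<in>{a,b,c}. \<forall>r\<in>{a,b,c}. p \<noteq> r \<longrightarrow> q ((1/2) *\<^sub>R (p + r)) = tg g p r)"
      using edge_cond_iff[where Q=q and g=g] by blast
    show ?thesis
      unfolding P_def V poly2_2_quadn g_def[symmetric] L E by auto
  qed
  have ex: "\<exists>q. P q"
  proof -
    have "\<forall>i. \<exists>p. quadn p \<and> p a = g a $ i \<and> p (a + u) = g b $ i \<and> p (a + v) = g c $ i
       \<and> p (a + (1/2) *\<^sub>R u) = tg g a b $ i \<and> p (a + (1/2) *\<^sub>R v) = tg g a c $ i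
       \<and> p (a + (1/2) *\<^sub>R u + (1/2) *\<^sub>R v) = tg g b c $ i"
      using p2_exists[OF D] by blast
    then obtain pp where pp: "\<And>i. quadn (pp i) \<and> pp i a = g a $ i \<and> pp i (a + u) = g b $ i \<and> pp i (a + v) = g c $ i
       \<and> pp i (a + (1/2) *\<^sub>R u) = tg g a b $ i \<and> pp i (a + (1/2) *\<^sub>R v) = tg g a c $ i
       \<and> pp i (a + (1/2) *\<^sub>R u + (1/2) *\<^sub>R v) = tg g b c $ i"
      by metis
    define q where "q = (\<lambda>x. \<chi> i. pp i x)"
    have "P q" unfolding Piff
      using pp unfolding q_def u_def v_def unfolding mid_repr(5) unfolding mid_repr(1-4) by (simp add: vec_eq_iff)
    then show ?thesis by blast
  qed
  have un: "q1 = q2" if "P q1" "P q2" for q1 q2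
  proof -
    have "q1 x $ i = q2 x $ i" for x i
    proof -
      let ?d = "\<lambda>x. q1 x $ i + (-1) * q2 x $ i"
      have "quadn ?d" using that unfolding Piff by (intro quadn_add quadn_scale) auto
      then have "?d x = 0"
        by (rule quadn_zero[OF D, of _ a]) (use that in \<open>unfold u_def v_def mid_repr(5), unfold mid_repr(1-4), auto simp: Piff\<close>)
      then show ?thesis by simp
    qed
    then show ?thesis by (simp add: vec_eq_iff fun_eq_iff)
  qed
  obtain q0 where q0: "P q0" using ex by blast
  have "P (ldgrad T w)" unfolding ld
    by (rule theI[of P q0]) (use q0 un in blast)+
  then show ?thesis unfolding Piff by blast
qed

lemma grad_quadn_affn:
  assumes "quadn p"
  shows "affn (\<lambda>x. grad p x $ j)"
proof -
  obtain c00 c10 c01 c20 c11 c02 where c: "\<And>x. p x = c00 + c10 * x$1 + c01 * x$2 + c20 * (x$1)^2 + c11 * (x$1 * x$2) + c02 * (x$2)^2"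
    using assms unfolding quadn_def by blast
  have pe: "p = (\<lambda>x. c00 + c10 * x$1 + c01 * x$2 + c20 * (x$1 * x$1) + c11 * (x$1 * x$2) + c02 * (x$2 * x$2))"
    by (rule ext) (simp add: c power2_eq_square)
  have vn: "((\<lambda>x. x $ i) has_derivative (\<lambda>x. x $ i)) F" for i :: 2 and F
    by (rule bounded_linear.has_derivative[OF bounded_linear_vec_nth has_derivative_ident])
  have d: "(p has_derivative (\<lambda>h. 0 + c10 * h$1 + c01 * h$2 + c20 * (x$1 * h$1 + h$1 * x$1) + c11 * (x$1 * h$2 + h$1 * x$2)
      + c02 * (x$2 * h$2 + h$2 * x$2))) (at x)" for x
    unfolding pe
    by (intro has_derivative_add has_derivative_mult has_derivative_const vn has_derivative_mult_right)
  define e1 where "e1 = (axis j (1::real) :: real^2) $ 1"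
  define e2 where "e2 = (axis j (1::real) :: real^2) $ 2"
  have "grad p x $ j = (c10 * e1 + c01 * e2) + (2 * c20 * e1 + c11 * e2) * x$1 + (c11 * e1 + 2 * c02 * e2) * x$2" for x
    unfolding grad_def frechet_derivative_at[OF d[of x], symmetric]
    by (simp add: e1_def e2_def algebra_simps)
  then show ?thesis unfolding affn_def by blast
qed

lemma linterp_aff:
  assumes V: "verts T = {a, b, c}" and nc: "\<not> collinear {a, b, c}"
  shows "affn (linterp1 T f) \<and> linterp1 T f a = f a \<and> linterp1 T f b = f b \<and> linterp1 T f c = f c"
proof -
  define u where "u = b - a"
  define v where "v = c - a"
  have D: "det2 u v \<noteq> 0" unfolding u_def v_def by (rule noncol_det[OF nc])
  define P where "P = (\<lambda>l. poly2 1 l \<and> (\<forall>z\<in>verts T. l z = f z))"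
  have Piff: "P l \<longleftrightarrow> affn l \<and> l a = f a \<and> l b = f b \<and> l c = f c" for l
    unfolding P_def V poly2_1_affn by auto
  obtain l0 where l0: "affn l0 \<and> l0 a = f a \<and> l0 (a + u) = f b \<and> l0 (a + v) = f c"
    using p1_exists[OF D] by blast
  have Pl0: "P l0" unfolding Piff using l0 unfolding u_def v_def mid_repr(1,2) by blast
  have un: "l1 = l2" if "P l1" "P l2" for l1 l2
  proof -
    have "l1 x = l2 x" for x
    proof -
      let ?d = "\<lambda>x. l1 x + (-1) * l2 x"
      have "affn ?d" using that unfolding Piff by (intro affn_add affn_scale) auto
      then have "?d x = 0"
        by (rule affn_zero[OF D, of _ a]) (use that in \<open>unfold u_def v_def mid_repr(1-2), auto simp: Piff\<close>)
      then show ?thesis by simp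
    qed
    then show ?thesis by (simp add: fun_eq_iff)
  qed
  have "P (linterp1 T f)" unfolding linterp1_def P_def[symmetric]
    by (rule theI[of P l0]) (use Pl0 un in blast)+
  then show ?thesis unfolding Piff by blast
qed

lemma affn_cont: "affn f \<Longrightarrow> continuous_on S f"
proof -
  assume "affn f"
  then obtain c0 c1 c2 where "\<And>x. f x = c0 + c1 * x$1 + c2 * x$2" unfolding affn_def by blast
  then have "f = (\<lambda>x. c0 + c1 * x$1 + c2 * x$2)" by (rule ext)
  then show ?thesis by (simp add: continuous_intros)
qed

lemma affn_comb3: "affn f \<Longrightarrow> al + be + ga = 1 \<Longrightarrow>
   f (al *\<^sub>R p + be *\<^sub>R q + ga *\<^sub>R r) = al * f p + be * f q + ga * f r"
proof -
  assume af: "affn f" and s: "al + be + ga = 1"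
  obtain c0 c1 c2 where c: "\<And>x. f x = c0 + c1 * x$1 + c2 * x$2" using af unfolding affn_def by blast
  have "f (al *\<^sub>R p + be *\<^sub>R q + ga *\<^sub>R r) = c0 + c1 * (al * p$1 + be * q$1 + ga * r$1) + c2 * (al * p$2 + be * q$2 + ga * r$2)"
    by (simp add: c)
  also have "\<dots> = (al + be + ga) * c0 + c1 * (al * p$1 + be * q$1 + ga * r$1) + c2 * (al * p$2 + be * q$2 + ga * r$2)"
    by (simp add: s)
  also have "\<dots> = al * f p + be * f q + ga * f r"
    unfolding c by (simp add: algebra_simps)
  finally show ?thesis .
qed

lemma affn_comb2: "affn f \<Longrightarrow> f (s *\<^sub>R p + (1 - s) *\<^sub>R q) = s * f p + (1 - s) * f q"
  using affn_comb3[of f s "1 - s" 0 p q q] by simp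

lemma cont_int:
  fixes f :: "real^2 \<Rightarrow> real"
  assumes "compact S" "continuous_on S f"
  shows "f integrable_on S"
proof -
  have "integrable lborel (\<lambda>x. indicator S x *\<^sub>R f x)"
    by (rule borel_integrable_compact[OF assms])
  then have "(\<lambda>x. indicator S x *\<^sub>R f x) integrable_on UNIV" by (rule integrable_on_lborel)
  then have "(\<lambda>x. if x \<in> S then f x else 0) integrable_on UNIV"
  proof -
    have "(\<lambda>x. indicator S x *\<^sub>R f x) = (\<lambda>x. if x \<in> S then f x else 0)"
      by (auto simp: indicator_def)
    then show "(\<lambda>x. indicator S x *\<^sub>R f x) integrable_on UNIV \<Longrightarrow> ?thesis" by simp
  qed
  then show ?thesis using integrable_restrict_UNIV by blast
qed

lemma integral_const_meas:
  fixes S :: "(real^2) set"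
  assumes "S \<in> lmeasurable"
  shows "integral S (\<lambda>x. c) = c * measure lebesgue S"
proof -
  have "integral S (\<lambda>x. c) = integral S (\<lambda>x. c *\<^sub>R (1::real))" by simp
  also have "\<dots> = c * integral S (\<lambda>x. 1::real)" by (simp only: integral_cmul) simp
  also have "\<dots> = c * measure lebesgue S" using lmeasure_integral[OF assms] by simp
  finally show ?thesis .
qed

definition Gv :: "(real^2) set \<Rightarrow> (real^2 \<Rightarrow> real^3) \<Rightarrow> real^2 \<Rightarrow> real^2^2^3" where
  "Gv T y x = (\<chi> k. dgrad_deriv T y k x)"

lemma hess_sq_norm: "hess_sq T y x = (norm (Gv T y x))^2"
  unfolding hess_sq_def power2_norm_eq_inner inner_vec_def Gv_def vec_lambda_beta inner_real_def
  by (simp add: power2_eq_square)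

lemma Gv_affn:
  assumes V: "verts T = {a, b, c}" and nc: "\<not> collinear {a, b, c}"
  shows "affn (\<lambda>x. Gv T y x $ k $ i $ j)"
  unfolding Gv_def dgrad_deriv_def vec_lambda_beta
  by (rule grad_quadn_affn[OF ldgrad_quad[OF V nc]])

lemma Gv_comb3:
  assumes V: "verts T = {a, b, c}" and nc: "\<not> collinear {a, b, c}" and s: "al + be + ga = 1"
  shows "Gv T y (al *\<^sub>R p + be *\<^sub>R q + ga *\<^sub>R r) = al *\<^sub>R Gv T y p + be *\<^sub>R Gv T y q + ga *\<^sub>R Gv T y r"
  using affn_comb3[OF Gv_affn[OF V nc] s] by (simp add: vec_eq_iff)

lemma hess_cont:
  assumes V: "verts T = {a, b, c}" and nc: "\<not> collinear {a, b, c}"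
  shows "continuous_on S (hess_sq T y)"
proof -
  have "hess_sq T y = (\<lambda>x. \<Sum>k\<in>UNIV. \<Sum>i\<in>UNIV. \<Sum>j\<in>UNIV. (Gv T y x $ k $ i $ j)^2)"
    by (simp add: fun_eq_iff hess_sq_def Gv_def)
  moreover have "continuous_on S (\<lambda>x. Gv T y x $ k $ i $ j)" for k i j
    by (rule affn_cont[OF Gv_affn[OF V nc]])
  ultimately show ?thesis by (simp add: continuous_intros)
qed

lemma hull3_repr:
  assumes "x \<in> convex hull {a, b, c::real^2}"
  obtains al be ga where "0 \<le> al" "0 \<le> be" "0 \<le> ga" "al + be + ga = 1" "x = al *\<^sub>R a + be *\<^sub>R b + ga *\<^sub>R c"
  using assms unfolding convex_hull_3 by blast

lemma sq_sum_le: "(p + q)^2 \<le> 2 * (p^2 + (q::real)^2)"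
proof -
  have "0 \<le> (p - q)^2" by simp
  then show ?thesis by (simp add: power2_eq_square algebra_simps)
qed

lemma dlap_bound:
  "(norm (dlap T y x))^2 \<le> 2 * (norm (Gv T y x))^2"
proof -
  let ?G = "\<lambda>k i j. dgrad_deriv T y k x $ i $ j"
  have "(norm (dlap T y x))^2 = (\<Sum>k\<in>UNIV. (?G k 1 1 + ?G k 2 2)^2)"
    unfolding power2_norm_eq_inner inner_vec_def dlap_def vec_lambda_beta inner_real_def
    by (simp add: sum_2 power2_eq_square)
  also have "\<dots> \<le> (\<Sum>k\<in>UNIV. 2 * (\<Sum>i\<in>UNIV. \<Sum>j\<in>UNIV. (?G k i j)^2))"
  proof (rule sum_mono)
    fix k
    have "(?G k 1 1 + ?G k 2 2)^2 \<le> 2 * ((?G k 1 1)^2 + (?G k 2 2)^2)"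
      by (rule sq_sum_le)
    also have "\<dots> \<le> 2 * (\<Sum>i\<in>UNIV. \<Sum>j\<in>UNIV. (?G k i j)^2)"
      by (simp add: sum_2)
    finally show "(?G k 1 1 + ?G k 2 2)^2 \<le> 2 * (\<Sum>i\<in>UNIV. \<Sum>j\<in>UNIV. (?G k i j)^2)" .
  qed
  also have "\<dots> = 2 * (norm (Gv T y x))^2"
    unfolding hess_sq_norm[symmetric] hess_sq_def by (simp add: sum_distrib_left)
  finally show ?thesis .
qed

lemma norm_comb3_le:
  fixes A B C :: "'a::real_normed_vector"
  assumes "0 \<le> al" "0 \<le> be" "0 \<le> ga"
  shows "norm (al *\<^sub>R A + be *\<^sub>R B + ga *\<^sub>R C) \<le> al * norm A + be * norm B + ga * norm C"
proof -
  have "norm (al *\<^sub>R A + be *\<^sub>R B + ga *\<^sub>R C) \<le> norm (al *\<^sub>R A) + norm (be *\<^sub>R B) + norm (ga *\<^sub>R C)"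
    by (meson add_mono norm_triangle_ineq order_trans order_refl)
  also have "\<dots> = al * norm A + be * norm B + ga * norm C" using assms by simp
  finally show ?thesis .
qed

lemma comb3_le_max:
  fixes A B C M :: real
  assumes "0 \<le> al" "0 \<le> be" "0 \<le> ga" "al + be + ga = 1" "A \<le> M" "B \<le> M" "C \<le> M"
  shows "al * A + be * B + ga * C \<le> M"
proof -
  have "al * A + be * B + ga * C \<le> al * M + be * M + ga * M"
    using assms by (intro add_mono mult_left_mono) auto
  also have "\<dots> = M" using assms(4) by (metis distrib_right mult_1)
  finally show ?thesis .
qed

lemma tri_est:
  fixes T :: "(real^2) set" and y :: "real^2 \<Rightarrow> real^3"
  assumes V: "verts T = {a, b, c}" and Th: "T = convex hull {a, b, c}" and nc: "\<not> collinear {a, b, c}"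
    and cr: "\<And>z. z \<in> {a, b, c} \<Longrightarrow> norm (cross3 (column 1 (ljac T y z)) (column 2 (ljac T y z))) \<le> 1"
  shows "(integral T (linterp1 T (\<lambda>x. dlap T y x \<bullet> cross3 (column 1 (ljac T y x)) (column 2 (ljac T y x)))))^2
           \<le> 128 * measure lebesgue T * integral T (hess_sq T y)"
proof -
  define F where "F = (\<lambda>x. dlap T y x \<bullet> cross3 (column 1 (ljac T y x)) (column 2 (ljac T y x)))"
  define G where "G = Gv T y"
  define \<mu> where "\<mu> = measure lebesgue T"
  have compT: "compact T" unfolding Th by (rule compact_convex_hull) simp
  have lmT: "T \<in> lmeasurable" by (rule lmeasurable_compact[OF compT])
  have mu0: "0 \<le> \<mu>" unfolding \<mu>_def by simp
  have convT: "convex T" unfolding Th by simp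
  have vinT: "z \<in> T" if "z \<in> {a, b, c}" for z unfolding Th using that by (rule hull_inc)
  have hint: "hess_sq T y integrable_on S" if "compact S" for S
    by (rule cont_int[OF that hess_cont[OF V nc]])
  have hnn: "0 \<le> hess_sq T y x" for x unfolding hess_sq_norm by simp
  define M where "M = max (norm (G a)) (max (norm (G b)) (norm (G c)))"
  have Mge: "norm (G z) \<le> M" if "z \<in> {a, b, c}" for z using that unfolding M_def by auto
  have M0: "0 \<le> M" unfolding M_def by (simp add: le_max_iff_disj)
  have Gw: "norm (G w) \<le> M" if wT: "w \<in> T" for w
  proof -
    obtain al be ga where abg: "0 \<le> al" "0 \<le> be" "0 \<le> ga" "al + be + ga = 1" "w = al *\<^sub>R a + be *\<^sub>R b + ga *\<^sub>R c"
      using wT unfolding Th by (rule hull3_repr)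
    have "norm (G w) \<le> al * norm (G a) + be * norm (G b) + ga * norm (G c)"
      unfolding abg(5) G_def Gv_comb3[OF V nc abg(4)] by (rule norm_comb3_le[OF abg(1-3)])
    also have "\<dots> \<le> M" by (rule comb3_le_max[OF abg(1-4)]) (auto intro: Mge)
    finally show ?thesis .
  qed
  have Fz: "(F z)^2 \<le> 2 * M^2" if z: "z \<in> {a, b, c}" for z
  proof -
    have "\<bar>F z\<bar> \<le> norm (dlap T y z) * norm (cross3 (column 1 (ljac T y z)) (column 2 (ljac T y z)))"
      unfolding F_def by (rule Cauchy_Schwarz_ineq2)
    also have "\<dots> \<le> norm (dlap T y z)" using cr[OF z] by (simp add: mult_left_le)
    finally have h: "\<bar>F z\<bar> \<le> norm (dlap T y z)" .
    have "\<bar>F z\<bar>^2 \<le> (norm (dlap T y z))^2" by (rule power_mono[OF h abs_ge_zero])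
    also have "\<dots> \<le> 2 * (norm (G z))^2" unfolding G_def by (rule dlap_bound)
    also have "\<dots> \<le> 2 * M^2" using Mge[OF z] by (simp add: power_mono)
    finally show ?thesis by simp
  qed
  define l where "l = linterp1 T F"
  have laff: "affn l" "l a = F a" "l b = F b" "l c = F c"
    using linterp_aff[OF V nc, of F] unfolding l_def by auto
  define NN where "NN = max \<bar>F a\<bar> (max \<bar>F b\<bar> \<bar>F c\<bar>)"
  have NN0: "0 \<le> NN" unfolding NN_def by (simp add: le_max_iff_disj)
  have NN2: "NN^2 \<le> 2 * M^2"
  proof -
    have "NN = \<bar>F a\<bar> \<or> NN = \<bar>F b\<bar> \<or> NN = \<bar>F c\<bar>" unfolding NN_def by linarith
    then show ?thesis using Fz[of a] Fz[of b] Fz[of c] by auto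
  qed
  have lb: "\<bar>l x\<bar> \<le> NN" if wT: "x \<in> T" for x
  proof -
    obtain al be ga where abg: "0 \<le> al" "0 \<le> be" "0 \<le> ga" "al + be + ga = 1" "x = al *\<^sub>R a + be *\<^sub>R b + ga *\<^sub>R c"
      using wT unfolding Th by (rule hull3_repr)
    have "\<bar>l x\<bar> = \<bar>al * F a + be * F b + ga * F c\<bar>"
      unfolding abg(5) affn_comb3[OF laff(1) abg(4)] laff(2-4) ..
    also have "\<dots> \<le> al * \<bar>F a\<bar> + be * \<bar>F b\<bar> + ga * \<bar>F c\<bar>"
      using norm_comb3_le[OF abg(1-3), of "F a" "F b" "F c"] by simp
    also have "\<dots> \<le> NN" by (rule comb3_le_max[OF abg(1-4)]) (auto simp: NN_def)
    finally show ?thesis .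
  qed
  have lint: "l integrable_on T" by (rule cont_int[OF compT affn_cont[OF laff(1)]])
  have up: "integral T l \<le> NN * \<mu>"
    using integral_le[OF lint integrable_on_const[OF lmT], of NN] lb
    unfolding integral_const_meas[OF lmT] \<mu>_def by (simp add: abs_le_iff)
  have lbn: "- NN \<le> l x" if "x \<in> T" for x using lb[OF that] by linarith
  have lo: "- (NN * \<mu>) \<le> integral T l"
    using integral_le[OF integrable_on_const[OF lmT] lint, of "- NN"] lbn
    unfolding integral_const_meas[OF lmT] \<mu>_def by simp
  have I2: "(integral T l)^2 \<le> NN^2 * \<mu>^2"
  proof -
    have "\<bar>integral T l\<bar> \<le> NN * \<mu>" using up lo by linarith
    then have "\<bar>integral T l\<bar>^2 \<le> (NN * \<mu>)^2" by (rule power_mono[OF _ abs_ge_zero])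
    then show ?thesis by (simp add: power_mult_distrib)
  qed
  obtain z where z: "z \<in> {a, b, c}" "norm (G z) = M"
    unfolding M_def by (metis insertI1 insertI2 max_def)
  define T' where "T' = (\<lambda>w. (1/4) *\<^sub>R w + (3/4) *\<^sub>R z) ` T"
  have T'sub: "T' \<subseteq> T"
  proof
    fix x assume "x \<in> T'"
    then obtain w where w: "w \<in> T" "x = (1/4) *\<^sub>R w + (3/4) *\<^sub>R z" unfolding T'_def by blast
    show "x \<in> T" unfolding w(2) by (rule convexD[OF convT w(1) vinT[OF z(1)]]) auto
  qed
  have compT': "compact T'" unfolding T'_def
    by (rule compact_continuous_image[OF _ compT]) (intro continuous_intros)
  have mT': "measure lebesgue T' = (1/16) * \<mu>"
    unfolding T'_def \<mu>_def using measure_lebesgue_affine[of "1/4" "(3/4) *\<^sub>R z" T] by (simp add: power2_eq_square)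
  have hT': "M^2 / 4 \<le> hess_sq T y x" if xT: "x \<in> T'" for x
  proof -
    obtain w where w: "w \<in> T" "x = (1/4) *\<^sub>R w + (3/4) *\<^sub>R z" using xT unfolding T'_def by blast
    have "G x = (1/4) *\<^sub>R G w + (3/4) *\<^sub>R G z"
      using Gv_comb3[OF V nc, of "1/4" "3/4" 0 y w z z] unfolding w(2) G_def by simp
    then have "norm (G x) \<ge> (3/4) * norm (G z) - (1/4) * norm (G w)"
      by (metis (no_types, opaque_lifting) add.commute norm_diff_ineq norm_scaleR abs_of_nonneg
          zero_le_divide_iff zero_le_one zero_le_numeral)
    then have "norm (G x) \<ge> M / 2" using Gw[OF w(1)] z(2) by linarith
    then have "(M/2)^2 \<le> (norm (G x))^2" using M0 by (simp add: power_mono)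
    then show ?thesis unfolding hess_sq_norm G_def by (simp add: power_divide)
  qed
  have "M^2 / 4 * ((1/16) * \<mu>) = integral T' (\<lambda>x. M^2 / 4)"
    using integral_const_meas[OF lmeasurable_compact[OF compT'], of "M^2/4"] mT' by (simp add: algebra_simps)
  also have "\<dots> \<le> integral T' (hess_sq T y)"
    by (rule integral_le[OF integrable_on_const[OF lmeasurable_compact[OF compT']] hint[OF compT'] hT'])
  also have "\<dots> \<le> integral T (hess_sq T y)"
    by (rule integral_subset_le[OF T'sub hint[OF compT'] hint[OF compT]]) (simp add: hnn)
  finally have low: "M^2 * \<mu> \<le> 64 * integral T (hess_sq T y)" by simp
  have "(integral T l)^2 \<le> NN^2 * \<mu>^2" by (rule I2)
  also have "\<dots> \<le> (2 * M^2) * \<mu>^2" using NN2 by (simp add: mult_right_mono)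
  also have "\<dots> = 2 * \<mu> * (M^2 * \<mu>)" by (simp add: power2_eq_square)
  also have "\<dots> \<le> 2 * \<mu> * (64 * integral T (hess_sq T y))" using mult_left_mono[OF low, of "2 * \<mu>"] mu0 by simp
  finally show ?thesis unfolding l_def F_def \<mu>_def by simp
qed

lemma negligible_seg: "negligible (closed_segment p (q::real^2))"
proof (cases "p = q")
  case True then show ?thesis by simp
next
  case False
  define d where "d = q - p"
  have d0: "d \<noteq> 0" using False unfolding d_def by simp
  have "rot90 d \<noteq> 0"
  proof
    assume "rot90 d = 0"
    then have "d \<bullet> d = 0" using rot90_inner(3)[of d] by simp
    then show False using d0 by simp
  qed
  then have neg: "negligible {x. rot90 d \<bullet> x = rot90 d \<bullet> p}" by (intro negligible_hyperplane) simp
  have "closed_segment p q \<subseteq> {x. rot90 d \<bullet> x = rot90 d \<bullet> p}"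
  proof
    fix x assume "x \<in> closed_segment p q"
    then obtain u where x: "x = (1 - u) *\<^sub>R p + u *\<^sub>R q" unfolding closed_segment_def by blast
    have "x = p + u *\<^sub>R d" unfolding x d_def by (simp add: algebra_simps)
    then show "x \<in> {x. rot90 d \<bullet> x = rot90 d \<bullet> p}" by (simp add: inner_add_right rot90_inner)
  qed
  then show ?thesis using neg negligible_subset by blast
qed

lemma orth_cross:
  fixes J :: "real^2^3"
  assumes "transpose J ** J = mat 1"
  shows "norm (cross3 (column 1 J) (column 2 J)) \<le> 1"
proof -
  have col: "column i J \<bullet> column j J = (transpose J ** J) $ i $ j" for i j
    by (simp add: matrix_matrix_mult_def transpose_def column_def inner_vec_def)
  have "column 1 J \<bullet> column 1 J = 1" "column 2 J \<bullet> column 2 J = 1" "column 1 J \<bullet> column 2 J = 0"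
    unfolding col assms by (simp_all add: mat_def)
  then have "(norm (cross3 (column 1 J) (column 2 J)))^2 = 1"
    using norm_cross[of "column 1 J" "column 2 J"] power2_norm_eq_inner[of "column 1 J"] power2_norm_eq_inner[of "column 2 J"]
    by simp
  then show ?thesis by (auto simp: power2_eq_1_iff)
qed

lemma reg_parts:
  assumes "regular_triangulation \<omega> Tr"
  shows "finite Tr" "\<And>T. T \<in> Tr \<Longrightarrow> triangle T" "\<Union>Tr = closure \<omega>"
    "\<And>T T'. T \<in> Tr \<Longrightarrow> T' \<in> Tr \<Longrightarrow> T \<noteq> T' \<Longrightarrow>
        T \<inter> T' = {} \<or> (\<exists>z. z \<in> verts T \<and> z \<in> verts T' \<and> T \<inter> T' = {z}) \<or>
        (\<exists>E. E \<in> edges T \<and> E \<in> edges T' \<and> T \<inter> T' = E)"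
  using assms unfolding regular_triangulation_def by simp_all

lemma adm_parts:
  assumes "y \<in> adm Tr \<Gamma>D yD \<phi>D"
  shows "\<And>k. S_dkt Tr (\<lambda>x. y x $ k)" "\<And>z. z \<in> nodes Tr \<Longrightarrow> transpose (vjac Tr y z) ** vjac Tr y z = mat 1"
  using assms unfolding adm_def by simp_all

lemma tri_facts:
  assumes reg: "regular_triangulation \<omega> Tr" and yadm: "y \<in> adm Tr \<Gamma>D yD \<phi>D" and TT: "T \<in> Tr"
  shows "(integral T (linterp1 T (\<lambda>x. dlap T y x \<bullet> cross3 (column 1 (ljac T y x)) (column 2 (ljac T y x)))))^2
           \<le> 128 * measure lebesgue T * integral T (hess_sq T y)"
    and "0 \<le> integral T (hess_sq T y)"
    and "T \<in> lmeasurable"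
proof -
  have "triangle T" by (rule reg_parts(2)[OF reg TT])
  then obtain a b c where V: "verts T = {a, b, c}" and Th: "T = convex hull {a, b, c}" and nc: "\<not> collinear {a, b, c}"
    using triangle_verts by blast
  have compT: "compact T" unfolding Th by (rule compact_convex_hull) simp
  show "T \<in> lmeasurable" by (rule lmeasurable_compact[OF compT])
  have hint: "hess_sq T y integrable_on T" by (rule cont_int[OF compT hess_cont[OF V nc]])
  show "0 \<le> integral T (hess_sq T y)"
    by (rule integral_nonneg[OF hint]) (simp add: hess_sq_norm)
  have cr: "norm (cross3 (column 1 (ljac T y z)) (column 2 (ljac T y z))) \<le> 1" if z: "z \<in> {a, b, c}" for z
  proof -
    have zN: "z \<in> nodes Tr" unfolding nodes_def using TT z V by (intro UnionI[of "verts T"]) auto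
    have zT: "z \<in> T" unfolding Th using z by (rule hull_inc)
    define T0 where "T0 = (SOME T. T \<in> Tr \<and> z \<in> T)"
    have T0: "T0 \<in> Tr \<and> z \<in> T0" unfolding T0_def by (rule someI[of _ T]) (use TT zT in blast)
    have dkt: "S_dkt Tr (\<lambda>x. y x $ k)" for k by (rule adm_parts(1)[OF yadm])
    have "grad (lpoly 3 T0 (\<lambda>x. y x $ k)) z = grad (lpoly 3 T (\<lambda>x. y x $ k)) z" for k
    proof -
      have "\<forall>z\<in>nodes Tr. \<forall>T\<in>Tr. \<forall>T'\<in>Tr. z \<in> T \<longrightarrow> z \<in> T' \<longrightarrow>
        grad (lpoly 3 T (\<lambda>x. y x $ k)) z = grad (lpoly 3 T' (\<lambda>x. y x $ k)) z"
        using dkt[of k] unfolding S_dkt_def by (rule conjunct2[OF conjunct2])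
      then show ?thesis using zN T0 TT zT by blast
    qed
    then have vj: "vjac Tr y z = ljac T y z"
      unfolding vjac_def T0_def[symmetric] ljac_def by (simp add: vec_eq_iff)
    have "transpose (vjac Tr y z) ** vjac Tr y z = mat 1" by (rule adm_parts(2)[OF yadm zN])
    then show ?thesis unfolding vj by (rule orth_cross)
  qed
  show "(integral T (linterp1 T (\<lambda>x. dlap T y x \<bullet> cross3 (column 1 (ljac T y x)) (column 2 (ljac T y x)))))^2
           \<le> 128 * measure lebesgue T * integral T (hess_sq T y)"
    by (rule tri_est[OF V Th nc cr])
qed

lemma sum_bound:
  assumes reg: "regular_triangulation \<omega> Tr" and yadm: "y \<in> adm Tr \<Gamma>D yD \<phi>D"
  shows "\<bar>\<Sum>T\<in>Tr. integral T (linterp1 T (\<lambda>x. dlap T y x \<bullet> cross3 (column 1 (ljac T y x)) (column 2 (ljac T y x))))\<bar>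
     \<le> sqrt 128 * sqrt (measure lebesgue (closure \<omega>)) * sqrt (\<Sum>T\<in>Tr. integral T (hess_sq T y))"
proof -
  define L where "L = (\<lambda>T. integral T (linterp1 T (\<lambda>x. dlap T y x \<bullet> cross3 (column 1 (ljac T y x)) (column 2 (ljac T y x)))))"
  define S where "S = (\<lambda>T. integral T (hess_sq T y))"
  define m where "m = (\<lambda>T::(real^2) set. measure lebesgue T)"
  have fin: "finite Tr" by (rule reg_parts(1)[OF reg])
  have S0: "0 \<le> S T" if "T \<in> Tr" for T unfolding S_def by (rule tri_facts(2)[OF reg yadm that])
  have m0: "0 \<le> m T" for T unfolding m_def by simp
  have LT: "\<bar>L T\<bar> \<le> sqrt 128 * (sqrt (m T) * sqrt (S T))" if T: "T \<in> Tr" for T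
  proof -
    have "(L T)^2 \<le> 128 * m T * S T" unfolding L_def m_def S_def by (rule tri_facts(1)[OF reg yadm T])
    then have "sqrt ((L T)^2) \<le> sqrt (128 * m T * S T)" by (rule real_sqrt_le_mono)
    then show ?thesis by (simp add: real_sqrt_mult)
  qed
  have "\<bar>\<Sum>T\<in>Tr. L T\<bar> \<le> (\<Sum>T\<in>Tr. \<bar>L T\<bar>)" by (rule sum_abs)
  also have "\<dots> \<le> (\<Sum>T\<in>Tr. sqrt 128 * (sqrt (m T) * sqrt (S T)))" by (rule sum_mono) (rule LT)
  also have "\<dots> = sqrt 128 * (\<Sum>T\<in>Tr. \<bar>sqrt (m T)\<bar> * \<bar>sqrt (S T)\<bar>)"
    unfolding sum_distrib_left by (rule sum.cong) (use m0 S0 in auto)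
  also have "\<dots> \<le> sqrt 128 * (L2_set (\<lambda>T. sqrt (m T)) Tr * L2_set (\<lambda>T. sqrt (S T)) Tr)"
    by (rule mult_left_mono[OF L2_set_mult_ineq]) simp
  also have "L2_set (\<lambda>T. sqrt (S T)) Tr = sqrt (\<Sum>T\<in>Tr. S T)"
    unfolding L2_set_def using S0 by (simp cong: sum.cong)
  also have "L2_set (\<lambda>T. sqrt (m T)) Tr = sqrt (\<Sum>T\<in>Tr. m T)"
    unfolding L2_set_def using m0 by simp
  also have "(\<Sum>T\<in>Tr. m T) = measure lebesgue (closure \<omega>)"
  proof -
    have U: "\<Union>Tr = closure \<omega>" by (rule reg_parts(3)[OF reg])
    have lm: "T \<in> lmeasurable" if "T \<in> Tr" for T by (rule tri_facts(3)[OF reg yadm that])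
    have pw: "pairwise (\<lambda>S T. negligible (S \<inter> T)) Tr"
    proof (rule pairwiseI)
      fix T T' assume TT: "T \<in> Tr" "T' \<in> Tr" "T \<noteq> T'"
      then have "T \<inter> T' = {} \<or> (\<exists>z. T \<inter> T' = {z}) \<or> (\<exists>E. E \<in> edges T \<and> T \<inter> T' = E)"
        using reg_parts(4)[OF reg] by blast
      moreover have "negligible E" if "E \<in> edges T" for E
        using that negligible_seg unfolding edges_def by blast
      ultimately show "negligible (T \<inter> T')" by auto
    qed
    show ?thesis unfolding m_def U[symmetric]
      by (rule measure_negligible_finite_Union[OF fin lm pw, symmetric])
  qed
  finally show ?thesis unfolding L_def S_def by (simp add: mult.assoc)
qed

lemma final_arith:
  fixes r A K :: real
  assumes r0: "0 \<le> r" and A0: "0 \<le> A" and h: "r^2 \<le> 2 * \<bar>K\<bar> + 2 * A * r"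
  shows "r \<le> 2 * A + 2 * \<bar>K\<bar> + 1"
proof (rule ccontr)
  assume "\<not> r \<le> 2 * A + 2 * \<bar>K\<bar> + 1"
  then have rc: "2 * A + 2 * \<bar>K\<bar> + 1 < r" by simp
  then have r1: "1 \<le> r" using A0 by linarith
  have "r * (2 * A + 2 * \<bar>K\<bar> + 1) < r * r" using rc r1 by (intro mult_strict_left_mono) auto
  moreover have "r * (2 * A + 2 * \<bar>K\<bar> + 1) = 2 * A * r + 2 * \<bar>K\<bar> * r + r" by (simp add: algebra_simps)
  moreover have "2 * \<bar>K\<bar> * 1 \<le> 2 * \<bar>K\<bar> * r" using r1 by (intro mult_left_mono) auto
  moreover have "r * r = r^2" by (simp add: power2_eq_square)
  ultimately show False using h r1 by linarith
qed

theorem proposition4p1: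
  fixes \<omega> \<Gamma>D :: "(real^2) set"
    and yD :: "real^2 \<Rightarrow> real^3" and \<phi>D :: "real^2 \<Rightarrow> real^2^3" and \<alpha> :: real
    and yDt :: "real^2 \<Rightarrow> real^3" and DyDt :: "real^2 \<Rightarrow> real^2^3"
    and H :: "real set" and Tr :: "real \<Rightarrow> (real^2) set set"
    and y :: "real \<Rightarrow> real^2 \<Rightarrow> real^3"
  assumes dom: "polygonal_domain \<omega>"
    and GD: "\<Gamma>D \<subseteq> frontier \<omega>" "positive_length \<Gamma>D"
    and Hpos: "H \<subseteq> {0<..}" and Hlim: "0 islimpt H"
    and tri: "\<And>h. h \<in> H \<Longrightarrow> regular_triangulation \<omega> (Tr h) \<and> mesh (Tr h) = h \<and>
                 \<Gamma>D = \<Union>{E \<in> edges_of (Tr h). E \<subseteq> \<Gamma>D}"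
    and ext_H3: "H3 \<omega> yDt"
    and ext_C1: "continuous_on (closure \<omega>) DyDt"
        "\<And>x. x \<in> closure \<omega> \<Longrightarrow> (yDt has_derivative (\<lambda>v. DyDt x *v v)) (at x within closure \<omega>)"
    and bdry: "\<And>x. x \<in> \<Gamma>D \<Longrightarrow> yD x = yDt x \<and> \<phi>D x = DyDt x"
    and bounded_energy: "\<exists>K. \<forall>h\<in>H. \<bar>energy (Tr h) \<Gamma>D yD \<phi>D \<alpha> (y h)\<bar> \<le> ereal K"
  shows "\<exists>C>0. \<forall>h\<in>H. dhess_norm (Tr h) (y h) \<le> C"
proof -
  obtain K where K: "\<And>h. h \<in> H \<Longrightarrow> \<bar>energy (Tr h) \<Gamma>D yD \<phi>D \<alpha> (y h)\<bar> \<le> ereal K"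
    using bounded_energy by blast
  define A where "A = \<bar>\<alpha>\<bar> * (sqrt 128 * sqrt (measure lebesgue (closure \<omega>)))"
  have A0: "0 \<le> A" unfolding A_def by simp
  define C where "C = 2 * A + 2 * \<bar>K\<bar> + 1"
  have "0 < C" unfolding C_def using A0 by simp
  moreover have "dhess_norm (Tr h) (y h) \<le> C" if hH: "h \<in> H" for h
  proof -
    have reg: "regular_triangulation \<omega> (Tr h)" using tri[OF hH] by blast
    define S where "S = (\<Sum>T\<in>Tr h. integral T (hess_sq T (y h)))"
    define I where "I = (\<Sum>T\<in>Tr h. integral T (linterp1 T
               (\<lambda>x. dlap T (y h) x \<bullet> cross3 (column 1 (ljac T (y h) x)) (column 2 (ljac T (y h) x)))))"
    have yadm: "y h \<in> adm (Tr h) \<Gamma>D yD \<phi>D"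
    proof (rule ccontr)
      assume "y h \<notin> adm (Tr h) \<Gamma>D yD \<phi>D"
      then have "energy (Tr h) \<Gamma>D yD \<phi>D \<alpha> (y h) = \<infinity>" unfolding energy_def by simp
      then show False using K[OF hH] by simp
    qed
    have "energy (Tr h) \<Gamma>D yD \<phi>D \<alpha> (y h) = ereal ((1/2) * S - \<alpha> * I)"
      unfolding energy_def S_def I_def using yadm by simp
    then have EK: "\<bar>(1/2) * S - \<alpha> * I\<bar> \<le> K" using K[OF hH] by simp
    have S0: "0 \<le> S" unfolding S_def
      by (rule sum_nonneg) (rule tri_facts(2)[OF reg yadm])
    have IB: "\<bar>I\<bar> \<le> sqrt 128 * sqrt (measure lebesgue (closure \<omega>)) * sqrt S"
      unfolding I_def S_def by (rule sum_bound[OF reg yadm])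
    have "\<bar>\<alpha> * I\<bar> \<le> A * sqrt S"
      unfolding A_def abs_mult using mult_left_mono[OF IB, of "\<bar>\<alpha>\<bar>"] by (simp add: mult.assoc)
    then have "S \<le> 2 * \<bar>K\<bar> + 2 * A * sqrt S" using EK by linarith
    then have "(sqrt S)^2 \<le> 2 * \<bar>K\<bar> + 2 * A * sqrt S" using S0 by simp
    then have "sqrt S \<le> C" unfolding C_def by (rule final_arith[OF real_sqrt_ge_zero[OF S0] A0])
    then show ?thesis unfolding dhess_norm_def S_def .
  qed
  ultimately show ?thesis by blast
qed

end
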